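(* If two bounding triples in $BT_n$ are conjugate under the action of $GL_\infty(\mathbb{F}_q)$, then they are conjugate under the action of the subgroup $GL_n(\mathbb{F}_q)$.
   Context: $\mathbb{F}_q^\infty$ has basis $e_1,e_2,\dots$; $\mathbb{F}_q^n=\mathrm{span}\{e_1,\dots,e_n\}$. $GL_\infty(\mathbb{F}_q)=\varinjlim GL_n(\mathbb{F}_q)$ under $g\mapsto\operatorname{diag}(g,\mathrm{Id})$, i.e. invertible $\mathbb{Z}_{>0}\times\mathbb{Z}_{>0}$ matrices differing from the identity in finitely many entries; $g^T$ is the transpose. A subspace is smooth if it contains $e_i$ for all sufficiently large $i$. A bounding triple is $(W,g,V)$ with $W,V$ smooth, $g\in GL_\infty(\mathbb{F}_q)$, $g$ acting as identity on $V$ and $g^T$ acting as identity on $W$. $BT_n$ is the set of bounding triples with $e_{n+1},e_{n+2},\dots\in V\cap W$. $GL_\infty(\mathbb{F}_q)$ acts by $x\cdot(W,g,V)=(x^{-T}W,xgx^{-1},xV)$, $x^{-T}=(x^{-1})^T$. *)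

theory Defs
  imports Main
begin

text \<open>Basis vectors are indexed from 0 (e_0, e_1, ...), i.e. the paper's e_i is
  our unit_vec (i - 1).\<close>

definition Finf :: "(nat \<Rightarrow> 'a::field) set" where
  "Finf = {v. finite {i. v i \<noteq> 0}}"

definition unit_vec :: "nat \<Rightarrow> nat \<Rightarrow> 'a::field" where
  "unit_vec i = (\<lambda>j. if j = i then 1 else 0)"

definition idm :: "nat \<Rightarrow> nat \<Rightarrow> 'a::field" where
  "idm = (\<lambda>i j. if i = j then 1 else 0)"

definition finitary :: "(nat \<Rightarrow> nat \<Rightarrow> 'a::field) \<Rightarrow> bool" where
  "finitary g \<longleftrightarrow> finite {(i, j). g i j \<noteq> idm i j}"

definition mmul :: "(nat \<Rightarrow> nat \<Rightarrow> 'a::field) \<Rightarrow> (nat \<Rightarrow> nat \<Rightarrow> 'a) \<Rightarrow> nat \<Rightarrow> nat \<Rightarrow> 'a" where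
  "mmul g h = (\<lambda>i j. \<Sum>k\<in>{k. g i k \<noteq> 0}. g i k * h k j)"

definition mtrans :: "(nat \<Rightarrow> nat \<Rightarrow> 'a) \<Rightarrow> nat \<Rightarrow> nat \<Rightarrow> 'a" where
  "mtrans g = (\<lambda>i j. g j i)"

definition mvec :: "(nat \<Rightarrow> nat \<Rightarrow> 'a::field) \<Rightarrow> (nat \<Rightarrow> 'a) \<Rightarrow> nat \<Rightarrow> 'a" where
  "mvec g v = (\<lambda>i. \<Sum>j\<in>{j. v j \<noteq> 0}. g i j * v j)"

definition GLinf :: "(nat \<Rightarrow> nat \<Rightarrow> 'a::field) set" where
  "GLinf = {g. finitary g \<and> (\<exists>h. finitary h \<and> mmul g h = idm \<and> mmul h g = idm)}"

definition minv :: "(nat \<Rightarrow> nat \<Rightarrow> 'a::field) \<Rightarrow> nat \<Rightarrow> nat \<Rightarrow> 'a" where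
  "minv x = (THE y. finitary y \<and> mmul x y = idm \<and> mmul y x = idm)"

definition GLn :: "nat \<Rightarrow> (nat \<Rightarrow> nat \<Rightarrow> 'a::field) set" where
  "GLn n = {x \<in> GLinf. \<forall>i j. (n \<le> i \<or> n \<le> j) \<longrightarrow> x i j = idm i j}"

definition is_subspace :: "(nat \<Rightarrow> 'a::field) set \<Rightarrow> bool" where
  "is_subspace W \<longleftrightarrow> W \<subseteq> Finf \<and> (\<lambda>i. 0) \<in> W \<and>
     (\<forall>v\<in>W. \<forall>w\<in>W. (\<lambda>i. v i + w i) \<in> W) \<and> (\<forall>c. \<forall>v\<in>W. (\<lambda>i. c * v i) \<in> W)"

definition smooth :: "(nat \<Rightarrow> 'a::field) set \<Rightarrow> bool" where
  "smooth W \<longleftrightarrow> is_subspace W \<and> (\<exists>N. \<forall>i\<ge>N. unit_vec i \<in> W)"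

type_synonym 'a triple = "(nat \<Rightarrow> 'a) set \<times> (nat \<Rightarrow> nat \<Rightarrow> 'a) \<times> (nat \<Rightarrow> 'a) set"

definition bounding_triple :: "'a::field triple \<Rightarrow> bool" where
  "bounding_triple T \<longleftrightarrow> (case T of (W, g, V) \<Rightarrow>
     smooth W \<and> smooth V \<and> g \<in> GLinf \<and>
     (\<forall>v\<in>V. mvec g v = v) \<and> (\<forall>w\<in>W. mvec (mtrans g) w = w))"

text \<open>BT_n (0-based): e_i in V and W for all i >= n.\<close>
definition BT :: "nat \<Rightarrow> 'a::field triple set" where
  "BT n = {T. bounding_triple T \<and>
     (case T of (W, g, V) \<Rightarrow> \<forall>i\<ge>n. unit_vec i \<in> V \<and> unit_vec i \<in> W)}"

definition act :: "(nat \<Rightarrow> nat \<Rightarrow> 'a::field) \<Rightarrow> 'a triple \<Rightarrow> 'a triple" where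
  "act x T = (case T of (W, g, V) \<Rightarrow>
     (mvec (mtrans (minv x)) ` W, mmul (mmul x g) (minv x), mvec x ` V))"

end

theory Submission
  imports Defs
begin

definition bnd :: "nat \<Rightarrow> (nat \<Rightarrow> nat \<Rightarrow> 'a::field) \<Rightarrow> bool" where
  "bnd N A \<longleftrightarrow> (\<forall>i j. (N \<le> i \<or> N \<le> j) \<longrightarrow> A i j = idm i j)"

lemma bnd_mono: "bnd N A \<Longrightarrow> N \<le> M \<Longrightarrow> bnd M A"
  unfolding bnd_def by auto

lemma bnd_finitary: "bnd N A \<Longrightarrow> finitary A"
proof -
  assume "bnd N A"
  then have "{(i, j). A i j \<noteq> idm i j} \<subseteq> {..<N} \<times> {..<N}"
    unfolding bnd_def by (auto simp flip: not_le)
  then show ?thesis unfolding finitary_def by (rule finite_subset) auto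
qed

lemma finitary_bnd: "finitary A \<Longrightarrow> \<exists>N. bnd N A"
proof -
  assume "finitary A"
  then have f: "finite {(i, j). A i j \<noteq> idm i j}" unfolding finitary_def .
  let ?D = "{(i, j). A i j \<noteq> idm i j}"
  have "finite (fst ` ?D \<union> snd ` ?D)" using f by auto
  then obtain N where N: "\<And>k. k \<in> fst ` ?D \<union> snd ` ?D \<Longrightarrow> k < N"
    by (meson finite_nat_set_iff_bounded)
  have "bnd N A" unfolding bnd_def
  proof (intro allI impI)
    fix i j assume "N \<le> i \<or> N \<le> j"
    show "A i j = idm i j"
    proof (rule ccontr)
      assume "A i j \<noteq> idm i j"
      then have "(i,j) \<in> ?D" by auto
      then have "i < N" "j < N" using N by force+
      then show False using \<open>N \<le> i \<or> N \<le> j\<close> by auto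
    qed
  qed
  then show ?thesis by blast
qed

lemma finitary_rs: "finitary A \<Longrightarrow> finite {k. A i k \<noteq> 0}"
proof -
  assume "finitary A"
  then obtain N where "bnd N A" using finitary_bnd by blast
  then have "{k. A i k \<noteq> 0} \<subseteq> {..<N} \<union> {i}"
    unfolding bnd_def idm_def by (auto split: if_splits) (metis not_le)
  then show ?thesis by (rule finite_subset) auto
qed

lemma finitary_cs: "finitary A \<Longrightarrow> finite {k. A k j \<noteq> 0}"
proof -
  assume "finitary A"
  then obtain N where "bnd N A" using finitary_bnd by blast
  then have "{k. A k j \<noteq> 0} \<subseteq> {..<N} \<union> {j}"
    unfolding bnd_def idm_def by (auto split: if_splits) (metis not_le)
  then show ?thesis by (rule finite_subset) auto
qed

lemma sum_eq_sup:
  fixes f :: "nat \<Rightarrow> 'a::field"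
  assumes "finite A" "finite S" "{k\<in>A. f k \<noteq> 0} \<subseteq> S" "\<And>k. k \<notin> A \<Longrightarrow> f k = 0"
  shows "sum f A = sum f S"
proof -
  have "sum f A = sum f (A \<union> S)"
    by (rule sum.mono_neutral_left) (use assms in auto)
  also have "sum f S = sum f (A \<union> S)"
    by (rule sum.mono_neutral_left) (use assms in auto)
  finally show ?thesis by simp
qed

lemma mmul_eq:
  assumes "finite {k. A i k \<noteq> 0}" "finite S" "{k. A i k \<noteq> 0 \<and> B k j \<noteq> 0} \<subseteq> S"
  shows "mmul A B i j = (\<Sum>k\<in>S. A i k * B k j)"
  unfolding mmul_def by (rule sum_eq_sup) (use assms in auto)

lemma mvec_eq:
  assumes "finite {k. v k \<noteq> 0}" "finite S" "{k. A i k \<noteq> 0 \<and> v k \<noteq> 0} \<subseteq> S"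
  shows "mvec A v i = (\<Sum>k\<in>S. A i k * v k)"
  unfolding mvec_def by (rule sum_eq_sup) (use assms in auto)

lemma rs_mmul_sub: "{k. mmul A B i k \<noteq> 0} \<subseteq> (\<Union>l\<in>{l. A i l \<noteq> 0}. {k. B l k \<noteq> 0})"
proof
  fix k assume "k \<in> {k. mmul A B i k \<noteq> 0}"
  then have "(\<Sum>l\<in>{l. A i l \<noteq> 0}. A i l * B l k) \<noteq> 0" unfolding mmul_def by simp
  then obtain l where "l \<in> {l. A i l \<noteq> 0}" "A i l * B l k \<noteq> 0"
    by (rule sum.not_neutral_contains_not_neutral)
  then have "A i l \<noteq> 0" "B l k \<noteq> 0" by auto
  then show "k \<in> (\<Union>l\<in>{l. A i l \<noteq> 0}. {k. B l k \<noteq> 0})" by auto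
qed

lemma mmul_assoc:
  assumes fa: "\<And>i. finite {k. A i k \<noteq> 0}" and fb: "\<And>i. finite {k. B i k \<noteq> 0}"
  shows "mmul (mmul A B) C = mmul A (mmul B C)"
proof (intro ext)
  fix i j
  define R where "R = {l. A i l \<noteq> 0}"
  define S where "S = (\<Union>l\<in>R. {k. B l k \<noteq> 0})"
  have fR: "finite R" using fa R_def by auto
  have fS: "finite S" unfolding S_def using fR fb by auto
  have sub: "{k. mmul A B i k \<noteq> 0} \<subseteq> S" unfolding S_def R_def by (rule rs_mmul_sub)
  have "mmul (mmul A B) C i j = (\<Sum>k\<in>S. mmul A B i k * C k j)"
    by (rule mmul_eq) (use sub fS finite_subset in auto)
  also have "\<dots> = (\<Sum>k\<in>S. (\<Sum>l\<in>R. A i l * B l k) * C k j)"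
    unfolding mmul_def R_def by simp
  also have "\<dots> = (\<Sum>l\<in>R. A i l * (\<Sum>k\<in>S. B l k * C k j))"
  proof -
    have "(\<Sum>k\<in>S. (\<Sum>l\<in>R. A i l * B l k) * C k j) = (\<Sum>k\<in>S. \<Sum>l\<in>R. A i l * (B l k * C k j))"
      by (simp only: sum_distrib_right mult.assoc)
    also have "\<dots> = (\<Sum>l\<in>R. \<Sum>k\<in>S. A i l * (B l k * C k j))"
      by (rule sum.swap)
    also have "\<dots> = (\<Sum>l\<in>R. A i l * (\<Sum>k\<in>S. B l k * C k j))"
      by (simp only: sum_distrib_left)
    finally show ?thesis .
  qed
  also have "\<dots> = (\<Sum>l\<in>R. A i l * mmul B C l j)"
  proof (rule sum.cong[OF refl])
    fix l assume "l \<in> R"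
    then have "{k. B l k \<noteq> 0} \<subseteq> S" unfolding S_def by auto
    then have "mmul B C l j = (\<Sum>k\<in>S. B l k * C k j)"
      by (intro mmul_eq) (use fb fS in auto)
    then show "A i l * (\<Sum>k\<in>S. B l k * C k j) = A i l * mmul B C l j" by simp
  qed
  also have "\<dots> = mmul A (mmul B C) i j" unfolding mmul_def R_def by simp
  finally show "mmul (mmul A B) C i j = mmul A (mmul B C) i j" .
qed

lemma mmul_idm_right:
  assumes "finite {k. A i k \<noteq> 0}"
  shows "mmul A idm i j = A i j"
proof -
  have "mmul A idm i j = (\<Sum>k\<in>{k. A i k \<noteq> 0}. A i k * idm k j)" unfolding mmul_def by simp
  also have "\<dots> = (\<Sum>k\<in>{k. A i k \<noteq> 0}. if k = j then A i k else 0)"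
    by (rule sum.cong) (auto simp: idm_def)
  also have "\<dots> = A i j"
    using assms by (subst sum.delta) auto
  finally show ?thesis .
qed

lemma mmul_idm_right'[simp]:
  assumes "finitary A" shows "mmul A idm = A"
  by (intro ext mmul_idm_right finitary_rs[OF assms])

lemma mmul_idm_left[simp]: "mmul idm A = A"
proof (intro ext)
  fix i j
  have "{k. (idm::nat\<Rightarrow>nat\<Rightarrow>'a) i k \<noteq> 0} = {i}" by (auto simp: idm_def)
  then have "mmul idm A i j = (\<Sum>k\<in>{i}. idm i k * A k j)" unfolding mmul_def by simp
  then show "mmul idm A i j = A i j" by (simp add: idm_def)
qed

lemma bnd_mmul: assumes "bnd N A" "bnd N B" shows "bnd N (mmul A B)"
  unfolding bnd_def
proof (intro allI impI)
  fix i j assume h: "N \<le> i \<or> N \<le> j"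
  show "mmul A B i j = idm i j"
  proof (cases "N \<le> i")
    case True
    have "{k. A i k \<noteq> 0} = {i}" using assms(1) True unfolding bnd_def idm_def
      by (auto split: if_splits)
    then have "mmul A B i j = A i i * B i j" unfolding mmul_def by simp
    also have "\<dots> = idm i j" using assms True unfolding bnd_def by (simp add: idm_def)
    finally show ?thesis .
  next
    case False
    then have j: "N \<le> j" using h by auto
    have "mmul A B i j = mmul A idm i j" unfolding mmul_def
      using assms(2) j unfolding bnd_def by simp
    also have "\<dots> = A i j" by (rule mmul_idm_right[OF finitary_rs[OF bnd_finitary[OF assms(1)]]])
    also have "\<dots> = idm i j" using assms(1) j unfolding bnd_def by simp
    finally show ?thesis .
  qed
qed

lemma bnd_common: "finitary A \<Longrightarrow> finitary B \<Longrightarrow> \<exists>N. bnd N A \<and> bnd N B"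
proof -
  assume "finitary A" "finitary B"
  then obtain N M where "bnd N A" "bnd M B" using finitary_bnd by metis
  then have "bnd (max N M) A" "bnd (max N M) B" using bnd_mono by (metis max.cobounded1 max.cobounded2)+
  then show ?thesis by blast
qed

lemma finitary_mmul: "finitary A \<Longrightarrow> finitary B \<Longrightarrow> finitary (mmul A B)"
  using bnd_common bnd_mmul bnd_finitary by metis

lemma bnd_mtrans: "bnd N A \<Longrightarrow> bnd N (mtrans A)"
  unfolding bnd_def mtrans_def idm_def by auto

lemma finitary_mtrans: "finitary A \<Longrightarrow> finitary (mtrans A)"
  using finitary_bnd bnd_mtrans bnd_finitary by metis

lemma mtrans_idm[simp]: "mtrans idm = idm"
  unfolding mtrans_def idm_def by (intro ext) auto

lemma finitary_idm[simp]: "finitary idm"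
  unfolding finitary_def by simp

lemma mtrans_mmul:
  assumes "finitary A" "finitary B"
  shows "mtrans (mmul A B) = mmul (mtrans B) (mtrans A)"
proof (intro ext)
  fix i j
  have "mmul (mtrans B) (mtrans A) i j = (\<Sum>k\<in>{k. A j k \<noteq> 0}. B k i * A j k)"
    unfolding mtrans_def
    by (rule mmul_eq) (use finitary_cs[OF assms(2)] finitary_rs[OF assms(1)] in auto)
  also have "\<dots> = mtrans (mmul A B) i j" unfolding mtrans_def mmul_def by (simp add: mult.commute)
  finally show "mtrans (mmul A B) i j = mmul (mtrans B) (mtrans A) i j" by simp
qed

lemma bnd_mvec_out:
  assumes "bnd N B" "finite {k. v k \<noteq> 0}" "N \<le> i"
  shows "mvec B v i = v i"
proof -
  have "mvec B v i = (\<Sum>j\<in>{k. v k \<noteq> 0}. if j = i then v j else 0)"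
    unfolding mvec_def by (rule sum.cong) (use assms in \<open>auto simp: bnd_def idm_def\<close>)
  also have "\<dots> = v i" using assms(2) by (subst sum.delta) auto
  finally show ?thesis .
qed

lemma supp_mvec:
  assumes "finitary B" "finite {k. v k \<noteq> 0}"
  shows "finite {k. mvec B v k \<noteq> 0}"
proof -
  obtain N where N: "bnd N B" using finitary_bnd assms by blast
  have "{k. mvec B v k \<noteq> 0} \<subseteq> {k. v k \<noteq> 0} \<union> {..<N}"
    using bnd_mvec_out[OF N assms(2)] by (auto simp flip: not_le)
  then show ?thesis by (rule finite_subset) (use assms in auto)
qed

lemma mvec_Finf: "finitary B \<Longrightarrow> v \<in> Finf \<Longrightarrow> mvec B v \<in> Finf"
  unfolding Finf_def using supp_mvec by blast

lemma mvec_idm: assumes "v \<in> Finf" shows "mvec idm v = v"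
proof (intro ext)
  fix i
  have f: "finite {k. v k \<noteq> 0}" using assms unfolding Finf_def by simp
  have "mvec idm v i = (\<Sum>j\<in>{k. v k \<noteq> 0}. if j = i then v j else 0)"
    unfolding mvec_def by (rule sum.cong) (auto simp: idm_def)
  also have "\<dots> = v i" using f by (subst sum.delta) auto
  finally show "mvec idm v i = v i" .
qed

lemma mvec_mmul:
  assumes "finitary A" "finitary B" "v \<in> Finf"
  shows "mvec (mmul A B) v = mvec A (mvec B v)"
proof (intro ext)
  fix i
  define J where "J = {k. v k \<noteq> 0}"
  define K where "K = {k. A i k \<noteq> 0}"
  have fJ: "finite J" using assms(3) unfolding Finf_def J_def by simp
  have fK: "finite K" using finitary_rs[OF assms(1)] K_def by simp
  have "mvec (mmul A B) v i = (\<Sum>j\<in>J. (\<Sum>k\<in>K. A i k * B k j) * v j)"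
    unfolding mvec_def mmul_def J_def K_def by simp
  also have "\<dots> = (\<Sum>j\<in>J. \<Sum>k\<in>K. A i k * (B k j * v j))"
    by (simp only: sum_distrib_right mult.assoc)
  also have "\<dots> = (\<Sum>k\<in>K. \<Sum>j\<in>J. A i k * (B k j * v j))"
    by (rule sum.swap)
  also have "\<dots> = (\<Sum>k\<in>K. A i k * (\<Sum>j\<in>J. B k j * v j))"
    by (simp only: sum_distrib_left)
  also have "\<dots> = (\<Sum>k\<in>K. A i k * mvec B v k)"
    unfolding mvec_def J_def by simp
  also have "\<dots> = mvec A (mvec B v) i"
    by (rule mvec_eq[symmetric]) (use supp_mvec[OF assms(2)] fJ fK K_def J_def in auto)
  finally show "mvec (mmul A B) v i = mvec A (mvec B v) i" .
qed

lemma inv_unique: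
  assumes "finitary x" "finitary h1" "finitary h2" "mmul x h1 = idm" "mmul h2 x = idm"
  shows "h1 = h2"
proof -
  have "h2 = mmul h2 (mmul x h1)" using assms by simp
  also have "\<dots> = mmul (mmul h2 x) h1"
    by (rule mmul_assoc[symmetric]) (use finitary_rs assms in auto)
  also have "\<dots> = h1" using assms by simp
  finally show ?thesis by simp
qed

lemma minv_props:
  assumes "x \<in> GLinf"
  shows "finitary (minv x) \<and> mmul x (minv x) = idm \<and> mmul (minv x) x = idm"
proof -
  from assms obtain h where h: "finitary h" "mmul x h = idm" "mmul h x = idm" and fx: "finitary x"
    unfolding GLinf_def by blast
  have "\<exists>!y. finitary y \<and> mmul x y = idm \<and> mmul y x = idm"
    using h fx inv_unique by blast
  then show ?thesis unfolding minv_def by (rule theI')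
qed

lemma minv_eq:
  assumes "finitary x" "finitary h" "mmul x h = idm" "mmul h x = idm"
  shows "minv x = h"
proof -
  have "x \<in> GLinf" using assms unfolding GLinf_def by blast
  then show ?thesis using minv_props inv_unique assms by metis
qed

lemma GLinf_finitary: "x \<in> GLinf \<Longrightarrow> finitary x" unfolding GLinf_def by blast

lemma GLinf_mmul:
  assumes "x \<in> GLinf" "y \<in> GLinf"
  shows "mmul y x \<in> GLinf \<and> minv (mmul y x) = mmul (minv x) (minv y)"
proof -
  have fx: "finitary x" "finitary (minv x)" "mmul x (minv x) = idm" "mmul (minv x) x = idm"
    using assms(1) minv_props GLinf_finitary by blast+
  have fy: "finitary y" "finitary (minv y)" "mmul y (minv y) = idm" "mmul (minv y) y = idm"
    using assms(2) minv_props GLinf_finitary by blast+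
  note rs = finitary_rs fx fy finitary_mmul
  have 1: "mmul (mmul y x) (mmul (minv x) (minv y)) = idm"
  proof -
    have "mmul (mmul y x) (mmul (minv x) (minv y)) = mmul y (mmul x (mmul (minv x) (minv y)))"
      by (rule mmul_assoc) (use rs in auto)
    also have "\<dots> = mmul y (mmul (mmul x (minv x)) (minv y))"
      by (subst mmul_assoc) (use rs in auto)
    also have "\<dots> = idm" using fx fy by simp
    finally show ?thesis .
  qed
  have 2: "mmul (mmul (minv x) (minv y)) (mmul y x) = idm"
  proof -
    have "mmul (mmul (minv x) (minv y)) (mmul y x) = mmul (minv x) (mmul (minv y) (mmul y x))"
      by (rule mmul_assoc) (use rs in auto)
    also have "\<dots> = mmul (minv x) (mmul (mmul (minv y) y) x)"
      by (subst mmul_assoc) (use rs in auto)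
    also have "\<dots> = idm" using fx fy by simp
    finally show ?thesis .
  qed
  have f1: "finitary (mmul y x)" "finitary (mmul (minv x) (minv y))" using rs by auto
  show ?thesis using 1 2 f1 minv_eq unfolding GLinf_def by blast
qed

lemma mmul_assoc':
  "finitary A \<Longrightarrow> finitary B \<Longrightarrow> mmul (mmul A B) C = mmul A (mmul B C)"
  by (rule mmul_assoc) (auto intro: finitary_rs)

lemma act_comp:
  assumes x: "x \<in> GLinf" and y: "y \<in> GLinf" and W: "W \<subseteq> Finf" and V: "V \<subseteq> Finf"
    and g: "finitary g"
  shows "act (mmul y x) (W, g, V) = act y (act x (W, g, V))"
proof -
  have fx: "finitary x" "finitary (minv x)" "mmul x (minv x) = idm" "mmul (minv x) x = idm"
    using x minv_props GLinf_finitary by blast+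
  have fy: "finitary y" "finitary (minv y)" "mmul y (minv y) = idm" "mmul (minv y) y = idm"
    using y minv_props GLinf_finitary by blast+
  have mi: "minv (mmul y x) = mmul (minv x) (minv y)" using GLinf_mmul x y by blast
  have 1: "mvec (mtrans (minv (mmul y x))) ` W = mvec (mtrans (minv y)) ` mvec (mtrans (minv x)) ` W"
    unfolding image_image mi
  proof (rule image_cong[OF refl])
    fix w assume "w \<in> W"
    then have "w \<in> Finf" using W by auto
    then show "mvec (mtrans (mmul (minv x) (minv y))) w = mvec (mtrans (minv y)) (mvec (mtrans (minv x)) w)"
      by (simp add: mtrans_mmul fx fy mvec_mmul finitary_mtrans)
  qed
  have 2: "mvec (mmul y x) ` V = mvec y ` mvec x ` V"
    unfolding image_image
    by (rule image_cong[OF refl]) (use V fx fy mvec_mmul in auto)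
  have 3: "mmul (mmul (mmul y x) g) (minv (mmul y x)) = mmul (mmul y (mmul (mmul x g) (minv x))) (minv y)"
    unfolding mi by (simp add: mmul_assoc' finitary_mmul fx fy g)
  show ?thesis unfolding act_def using 1 2 3 by simp
qed

lemma act_stab:
  assumes W: "W \<subseteq> Finf" and V: "V \<subseteq> Finf" and g: "finitary g"
    and z: "finitary z" and h: "finitary h" and zh: "mmul z h = idm" and hz: "mmul h z = idm"
    and zV: "mvec z ` V \<subseteq> V" and hV: "mvec h ` V \<subseteq> V"
    and zW: "mvec (mtrans z) ` W \<subseteq> W" and hW: "mvec (mtrans h) ` W \<subseteq> W"
    and zg: "mmul z g = mmul g z"
  shows "act z (W, g, V) = (W, g, V)"
proof -
  have mi: "minv z = h" using minv_eq z h zh hz by blast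
  have 1: "mvec (mtrans h) ` W = W"
  proof
    show "W \<subseteq> mvec (mtrans h) ` W"
    proof
      fix w assume w: "w \<in> W"
      have "mvec (mtrans h) (mvec (mtrans z) w) = mvec (mmul (mtrans h) (mtrans z)) w"
        using w W by (simp add: mvec_mmul finitary_mtrans z h subset_iff)
      also have "\<dots> = w" using w W zh
        by (simp add: mtrans_mmul[symmetric] z h mvec_idm subset_iff)
      finally show "w \<in> mvec (mtrans h) ` W" using zW w by (metis image_eqI image_subset_iff)
    qed
  qed (use hW in auto)
  have 2: "mvec z ` V = V"
  proof
    show "V \<subseteq> mvec z ` V"
    proof
      fix v assume v: "v \<in> V"
      have "mvec z (mvec h v) = mvec (mmul z h) v"
        using v V by (simp add: mvec_mmul z h subset_iff)
      also have "\<dots> = v" using v V zh by (simp add: mvec_idm subset_iff)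
      finally show "v \<in> mvec z ` V" using hV v by (metis image_eqI image_subset_iff)
    qed
  qed (use zV in auto)
  have 3: "mmul (mmul z g) h = g"
    unfolding zg by (simp add: mmul_assoc' g z zh)
  show ?thesis unfolding act_def mi using 1 2 3 by simp
qed

definition colshear :: "(nat \<Rightarrow> 'a::field) \<Rightarrow> nat \<Rightarrow> nat \<Rightarrow> nat \<Rightarrow> 'a" where
  "colshear u t = (\<lambda>i j. idm i j + (if j = t then u i else 0))"

definition rowshear :: "(nat \<Rightarrow> 'a::field) \<Rightarrow> nat \<Rightarrow> nat \<Rightarrow> nat \<Rightarrow> 'a" where
  "rowshear c t = (\<lambda>i j. idm i j + (if i = t then c j else 0))"

lemma mtrans_colshear: "mtrans (colshear u t) = rowshear u t"
  unfolding mtrans_def colshear_def rowshear_def idm_def by (intro ext) auto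

lemma mtrans_rowshear: "mtrans (rowshear u t) = colshear u t"
  unfolding mtrans_def colshear_def rowshear_def idm_def by (intro ext) auto

lemma bnd_colshear: "(\<And>i. N \<le> i \<Longrightarrow> u i = 0) \<Longrightarrow> t < N \<Longrightarrow> bnd N (colshear u t)"
  unfolding bnd_def colshear_def by auto

lemma Finf_bound: "u \<in> Finf \<Longrightarrow> \<exists>N. \<forall>i. N \<le> i \<longrightarrow> u i = 0"
proof -
  assume "u \<in> Finf"
  then have "finite {i. u i \<noteq> 0}" unfolding Finf_def by simp
  then obtain N where "\<And>i. i \<in> {i. u i \<noteq> 0} \<Longrightarrow> i < N"
    by (meson finite_nat_set_iff_bounded)
  then show ?thesis by (metis mem_Collect_eq not_le)
qed

lemma finitary_colshear: "u \<in> Finf \<Longrightarrow> finitary (colshear u t)"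
proof -
  assume "u \<in> Finf"
  then obtain N where N: "\<forall>i. N \<le> i \<longrightarrow> u i = 0" using Finf_bound by blast
  have "bnd (max N (Suc t)) (colshear u t)" by (rule bnd_colshear) (use N in auto)
  then show ?thesis by (rule bnd_finitary)
qed

lemma finitary_rowshear: "u \<in> Finf \<Longrightarrow> finitary (rowshear u t)"
  using finitary_colshear finitary_mtrans mtrans_colshear by metis

lemma mmul_colshear_left: "mmul (colshear u t) B i j = B i j + u i * B t j"
proof -
  have sub: "{k. colshear u t i k \<noteq> 0} \<subseteq> {i,t}" by (auto simp: colshear_def idm_def)
  have "mmul (colshear u t) B i j = (\<Sum>k\<in>{i,t}. colshear u t i k * B k j)"
    by (rule mmul_eq) (use sub finite_subset in auto)
  then show ?thesis by (cases "i = t") (auto simp: colshear_def idm_def algebra_simps)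
qed

lemma mmul_rowshear_right:
  assumes "finitary A" shows "mmul A (rowshear c t) i j = A i j + A i t * c j"
proof -
  let ?R = "{k. A i k \<noteq> 0}"
  have fR: "finite ?R" using finitary_rs[OF assms] .
  have "mmul A (rowshear c t) i j = (\<Sum>k\<in>?R. A i k * idm k j + (if k = t then A i k * c j else 0))"
    unfolding mmul_def rowshear_def by (rule sum.cong) (auto simp: algebra_simps)
  also have "\<dots> = (\<Sum>k\<in>?R. A i k * idm k j) + (\<Sum>k\<in>?R. if k = t then A i k * c j else 0)"
    by (rule sum.distrib)
  also have "(\<Sum>k\<in>?R. A i k * idm k j) = A i j"
    using mmul_idm_right[of A i j, OF fR] unfolding mmul_def by simp
  also have "(\<Sum>k\<in>?R. if k = t then A i k * c j else 0) = A i t * c j"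
    using fR by (subst sum.delta) auto
  finally show ?thesis .
qed

lemma mmul_colshear_right:
  assumes "finitary A" "u \<in> Finf"
  shows "mmul A (colshear u t) i j = A i j + (if j = t then mvec A u i else 0)"
proof -
  let ?R = "{k. A i k \<noteq> 0}"
  have fR: "finite ?R" using finitary_rs[OF assms(1)] .
  have "mmul A (colshear u t) i j = (\<Sum>k\<in>?R. A i k * idm k j + (if j = t then A i k * u k else 0))"
    unfolding mmul_def colshear_def by (rule sum.cong) (auto simp: algebra_simps)
  also have "\<dots> = (\<Sum>k\<in>?R. A i k * idm k j) + (\<Sum>k\<in>?R. if j = t then A i k * u k else 0)"
    by (rule sum.distrib)
  also have "(\<Sum>k\<in>?R. A i k * idm k j) = A i j"
    using mmul_idm_right[of A i j, OF fR] unfolding mmul_def by simp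
  also have "(\<Sum>k\<in>?R. if j = t then A i k * u k else 0) = (if j = t then mvec A u i else 0)"
  proof (cases "j = t")
    case True
    have "(\<Sum>k\<in>?R. A i k * u k) = mvec A u i"
      by (rule mvec_eq[symmetric]) (use assms(2) fR in \<open>auto simp: Finf_def\<close>)
    then show ?thesis using True by simp
  qed simp
  finally show ?thesis .
qed

lemma mmul_rowshear_left:
  assumes "finitary B" "c \<in> Finf"
  shows "mmul (rowshear c t) B i j = B i j + (if i = t then mvec (mtrans B) c j else 0)"
proof -
  have "mmul (rowshear c t) B i j = mtrans (mmul (rowshear c t) B) j i" unfolding mtrans_def by simp
  also have "\<dots> = mmul (mtrans B) (colshear c t) j i"
    by (simp add: mtrans_mmul assms finitary_rowshear mtrans_rowshear)
  also have "\<dots> = mtrans B j i + (if i = t then mvec (mtrans B) c j else 0)"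
    by (rule mmul_colshear_right) (simp_all add: assms finitary_mtrans)
  also have "\<dots> = B i j + (if i = t then mvec (mtrans B) c j else 0)"
    by (simp add: mtrans_def)
  finally show ?thesis .
qed

lemma mvec_colshear:
  assumes "v \<in> Finf" shows "mvec (colshear u t) v = (\<lambda>i. v i + v t * u i)"
proof (intro ext)
  fix i
  let ?J = "{k. v k \<noteq> 0}"
  have fJ: "finite ?J" using assms unfolding Finf_def by simp
  have "mvec (colshear u t) v i = (\<Sum>k\<in>?J. (if k = i then v k else 0) + (if k = t then u i * v k else 0))"
    unfolding mvec_def colshear_def by (rule sum.cong) (auto simp: idm_def algebra_simps)
  also have "\<dots> = (\<Sum>k\<in>?J. if k = i then v k else 0) + (\<Sum>k\<in>?J. if k = t then u i * v k else 0)"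
    by (rule sum.distrib)
  also have "\<dots> = v i + v t * u i"
    using fJ by (auto simp: sum.delta mult.commute)
  finally show "mvec (colshear u t) v i = v i + v t * u i" .
qed

lemma mvec_rowshear:
  assumes "v \<in> Finf" shows "mvec (rowshear c t) v = (\<lambda>i. v i + (\<Sum>k\<in>{k. v k \<noteq> 0}. c k * v k) * unit_vec t i)"
proof (intro ext)
  fix i
  let ?J = "{k. v k \<noteq> 0}"
  have fJ: "finite ?J" using assms unfolding Finf_def by simp
  have "mvec (rowshear c t) v i = (\<Sum>k\<in>?J. (if k = i then v k else 0) + (if i = t then c k * v k else 0))"
    unfolding mvec_def rowshear_def by (rule sum.cong) (auto simp: idm_def algebra_simps)
  also have "\<dots> = (\<Sum>k\<in>?J. if k = i then v k else 0) + (\<Sum>k\<in>?J. if i = t then c k * v k else 0)"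
    by (rule sum.distrib)
  also have "\<dots> = v i + (\<Sum>k\<in>?J. c k * v k) * unit_vec t i"
    using fJ by (auto simp: sum.delta unit_vec_def)
  finally show "mvec (rowshear c t) v i = v i + (\<Sum>k\<in>?J. c k * v k) * unit_vec t i" .
qed

lemma BT_facts:
  assumes "(W, g, V) \<in> BT n"
  shows "is_subspace W" "is_subspace V" "W \<subseteq> Finf" "V \<subseteq> Finf" "g \<in> GLinf" "finitary g"
    "\<And>v. v \<in> V \<Longrightarrow> mvec g v = v" "\<And>w. w \<in> W \<Longrightarrow> mvec (mtrans g) w = w"
    "\<And>t. n \<le> t \<Longrightarrow> unit_vec t \<in> V" "\<And>t. n \<le> t \<Longrightarrow> unit_vec t \<in> W"
  using assms unfolding BT_def bounding_triple_def smooth_def is_subspace_def GLinf_def by auto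

lemma mvec_unit: "mvec A (unit_vec t) i = A i t"
proof -
  have "{k. (unit_vec t k::'a) \<noteq> 0} = {t}" by (auto simp: unit_vec_def)
  then show ?thesis unfolding mvec_def by (simp add: unit_vec_def)
qed

lemma BT_g_col:
  assumes "(W, g, V) \<in> BT n" "n \<le> t" shows "g i t = idm i t"
proof -
  have "mvec g (unit_vec t) i = unit_vec t i" using BT_facts(7,9)[OF assms(1)] assms(2) by simp
  then have "g i t = unit_vec t i" by (simp only: mvec_unit)
  then show ?thesis by (simp add: unit_vec_def idm_def)
qed

lemma BT_g_row:
  assumes "(W, g, V) \<in> BT n" "n \<le> t" shows "g t j = idm t j"
proof -
  have "mvec (mtrans g) (unit_vec t) j = unit_vec t j" using BT_facts(8,10)[OF assms(1)] assms(2) by simp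
  then have "mtrans g j t = unit_vec t j" by (simp only: mvec_unit)
  then show ?thesis by (simp add: unit_vec_def idm_def mtrans_def)
qed

lemma sub_lin:
  assumes "is_subspace W" "v \<in> W" "w \<in> W" shows "(\<lambda>i. v i + c * w i) \<in> W"
proof -
  have "(\<lambda>i. c * w i) \<in> W" using assms(1,3) unfolding is_subspace_def by simp
  then show ?thesis using assms(1,2) unfolding is_subspace_def by simp
qed

lemma sub_scale:
  assumes "is_subspace W" "w \<in> W" shows "(\<lambda>i. c * w i) \<in> W"
  using assms unfolding is_subspace_def by simp

lemma stab_col:
  assumes T: "(W, g, V) \<in> BT n" and t: "n \<le> t" and u: "u \<in> V" and ut: "1 + u t \<noteq> 0"
  shows "colshear u t \<in> GLinf \<and> act (colshear u t) (W, g, V) = (W, g, V)"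
proof -
  note F = BT_facts[OF T]
  define s where "s = 1 / (1 + u t)"
  define u' where "u' = (\<lambda>i. (- s) * u i)"
  have u'V: "u' \<in> V" unfolding u'_def by (rule sub_scale[OF F(2) u])
  have uF: "u \<in> Finf" "u' \<in> Finf" using F(4) u u'V by auto
  have s1: "s * (1 + u t) = 1" unfolding s_def using ut by simp
  have zh: "mmul (colshear u t) (colshear u' t) = idm"
  proof (intro ext)
    fix i j
    have "u i * (1 + - s * u t) + - s * u i = u i * (1 - s * (1 + u t))" by (simp add: algebra_simps)
    then have e: "u i * (1 + - s * u t) + - s * u i = 0" using s1 by simp
    show "mmul (colshear u t) (colshear u' t) i j = idm i j"
      unfolding mmul_colshear_left using e by (auto simp: colshear_def idm_def u'_def algebra_simps)
  qed
  have hz: "mmul (colshear u' t) (colshear u t) = idm"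
  proof (intro ext)
    fix i j
    have "- s * u i * (1 + u t) + u i = u i * (1 - s * (1 + u t))" by (simp add: algebra_simps)
    then have e: "- s * u i * (1 + u t) + u i = 0" using s1 by simp
    show "mmul (colshear u' t) (colshear u t) i j = idm i j"
      unfolding mmul_colshear_left using e by (auto simp: colshear_def idm_def u'_def algebra_simps)
  qed
  have colV: "\<And>a. a \<in> V \<Longrightarrow> mvec (colshear a t) ` V \<subseteq> V"
  proof
    fix a x assume a: "a \<in> V" and "x \<in> mvec (colshear a t) ` V"
    then obtain v where v: "v \<in> V" "x = mvec (colshear a t) v" by blast
    have "v \<in> Finf" using F(4) v by auto
    then have "x = (\<lambda>i. v i + v t * a i)" using v(2) mvec_colshear by simp
    then show "x \<in> V" using sub_lin[OF F(2) v(1) a] by simp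
  qed
  have rowW: "\<And>a. mvec (mtrans (colshear a t)) ` W \<subseteq> W"
  proof
    fix a x assume "x \<in> mvec (mtrans (colshear a t)) ` W"
    then obtain w where w: "w \<in> W" "x = mvec (rowshear a t) w" by (auto simp: mtrans_colshear)
    have "w \<in> Finf" using F(3) w by auto
    then have "x = (\<lambda>i. w i + (\<Sum>k\<in>{k. w k \<noteq> 0}. a k * w k) * unit_vec t i)"
      using w(2) mvec_rowshear by simp
    then show "x \<in> W" using sub_lin[OF F(1) w(1) F(10)[OF t]] by simp
  qed
  have zg: "mmul (colshear u t) g = mmul g (colshear u t)"
  proof (intro ext)
    fix i j
    show "mmul (colshear u t) g i j = mmul g (colshear u t) i j"
      unfolding mmul_colshear_left mmul_colshear_right[OF F(6) uF(1)] F(7)[OF u]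
      using BT_g_row[OF T t] by (simp add: idm_def)
  qed
  have "colshear u t \<in> GLinf" unfolding GLinf_def
    using finitary_colshear[OF uF(1)] finitary_colshear[OF uF(2)] zh hz by blast
  then show ?thesis
    using act_stab[OF F(3) F(4) F(6) finitary_colshear[OF uF(1)] finitary_colshear[OF uF(2)] zh hz
          colV[OF u] colV[OF u'V] rowW rowW zg] by blast
qed

lemma stab_row:
  assumes T: "(W, g, V) \<in> BT n" and t: "n \<le> t" and c: "c \<in> W" and ct: "c t = 0"
  shows "rowshear c t \<in> GLinf \<and> act (rowshear c t) (W, g, V) = (W, g, V)"
proof -
  note F = BT_facts[OF T]
  define c' where "c' = (\<lambda>i. (- 1) * c i)"
  have c'W: "c' \<in> W" unfolding c'_def by (rule sub_scale[OF F(1) c])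
  have cF: "c \<in> Finf" "c' \<in> Finf" using F(3) c c'W by auto
  have zh: "mmul (rowshear c t) (rowshear c' t) = idm"
  proof (intro ext)
    fix i j
    have "mmul (rowshear c t) (rowshear c' t) i j = rowshear c t i j + rowshear c t i t * c' j"
      by (rule mmul_rowshear_right[OF finitary_rowshear[OF cF(1)]])
    then show "mmul (rowshear c t) (rowshear c' t) i j = idm i j"
      by (simp add: rowshear_def idm_def c'_def ct)
  qed
  have hz: "mmul (rowshear c' t) (rowshear c t) = idm"
  proof (intro ext)
    fix i j
    have "mmul (rowshear c' t) (rowshear c t) i j = rowshear c' t i j + rowshear c' t i t * c j"
      by (rule mmul_rowshear_right[OF finitary_rowshear[OF cF(2)]])
    then show "mmul (rowshear c' t) (rowshear c t) i j = idm i j"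
      by (simp add: rowshear_def idm_def c'_def ct)
  qed
  have rowV: "\<And>a. mvec (rowshear a t) ` V \<subseteq> V"
  proof
    fix a x assume "x \<in> mvec (rowshear a t) ` V"
    then obtain v where v: "v \<in> V" "x = mvec (rowshear a t) v" by blast
    have "v \<in> Finf" using F(4) v by auto
    then have "x = (\<lambda>i. v i + (\<Sum>k\<in>{k. v k \<noteq> 0}. a k * v k) * unit_vec t i)"
      using v(2) mvec_rowshear by simp
    then show "x \<in> V" using sub_lin[OF F(2) v(1) F(9)[OF t]] by simp
  qed
  have colW: "\<And>a. a \<in> W \<Longrightarrow> mvec (mtrans (rowshear a t)) ` W \<subseteq> W"
  proof
    fix a x assume a: "a \<in> W" and "x \<in> mvec (mtrans (rowshear a t)) ` W"
    then obtain w where w: "w \<in> W" "x = mvec (colshear a t) w" by (auto simp: mtrans_rowshear)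
    have "w \<in> Finf" using F(3) w by auto
    then have "x = (\<lambda>i. w i + w t * a i)" using w(2) mvec_colshear by simp
    then show "x \<in> W" using sub_lin[OF F(1) w(1) a] by simp
  qed
  have zg: "mmul (rowshear c t) g = mmul g (rowshear c t)"
  proof (intro ext)
    fix i j
    show "mmul (rowshear c t) g i j = mmul g (rowshear c t) i j"
      unfolding mmul_rowshear_left[OF F(6) cF(1)] mmul_rowshear_right[OF F(6)] F(8)[OF c]
      using BT_g_col[OF T t] by (simp add: idm_def)
  qed
  have "rowshear c t \<in> GLinf" unfolding GLinf_def
    using finitary_rowshear[OF cF(1)] finitary_rowshear[OF cF(2)] zh hz by blast
  then show ?thesis
    using act_stab[OF F(3) F(4) F(6) finitary_rowshear[OF cF(1)] finitary_rowshear[OF cF(2)] zh hz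
          rowV rowV colW[OF c] colW[OF c'W] zg] by blast
qed

lemma mvec_lin:
  assumes "v \<in> Finf" "w \<in> Finf"
  shows "mvec A (\<lambda>i. v i + c * w i) i = mvec A v i + c * mvec A w i"
proof -
  let ?S = "{k. v k \<noteq> 0} \<union> {k. w k \<noteq> 0}"
  have fv: "finite {k. v k \<noteq> 0}" and fw: "finite {k. w k \<noteq> 0}" using assms unfolding Finf_def by auto
  have fS: "finite ?S" using fv fw by auto
  have fvw: "finite {k. v k + c * w k \<noteq> 0}"
    by (rule finite_subset[OF _ fS]) auto
  have "mvec A (\<lambda>i. v i + c * w i) i = (\<Sum>k\<in>?S. A i k * (v k + c * w k))"
    by (rule mvec_eq) (use fvw fS in auto)
  also have "\<dots> = (\<Sum>k\<in>?S. A i k * v k) + c * (\<Sum>k\<in>?S. A i k * w k)"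
    by (simp add: distrib_left sum.distrib sum_distrib_left algebra_simps)
  also have "(\<Sum>k\<in>?S. A i k * v k) = mvec A v i"
    by (rule mvec_eq[symmetric]) (use fv fS in auto)
  also have "(\<Sum>k\<in>?S. A i k * w k) = mvec A w i"
    by (rule mvec_eq[symmetric]) (use fw fS in auto)
  finally show ?thesis .
qed

lemma unit_Finf: "unit_vec t \<in> Finf"
proof -
  have "{k. (unit_vec t k::'a) \<noteq> 0} = {t}" by (auto simp: unit_vec_def)
  then show ?thesis unfolding Finf_def by simp
qed

lemma step1:
  assumes T: "(W, g, V) \<in> BT n" and t: "n \<le> t" and x: "x \<in> GLinf" and xb: "bnd (Suc t) x"
    and ac: "act x (W, g, V) = (W', g', V')" and T': "(W', g', V') \<in> BT n"
  shows "\<exists>x1. x1 \<in> GLinf \<and> bnd (Suc t) x1 \<and> act x1 (W, g, V) = (W', g', V') \<and> x1 t t = 1"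
proof -
  note F = BT_facts[OF T]
  note F' = BT_facts[OF T']
  have fx: "finitary x" using x GLinf_finitary by blast
  have V': "V' = mvec x ` V" using ac unfolding act_def by simp
  have "unit_vec t \<in> V'" using F'(9) t by blast
  then obtain v where v: "v \<in> V" "mvec x v = unit_vec t" using V' by auto
  have vF: "v \<in> Finf" using v F(4) by auto
  have vb: "\<And>i. Suc t \<le> i \<Longrightarrow> v i = 0"
  proof -
    fix i assume i: "Suc t \<le> i"
    have "v i = mvec x v i"
      by (rule bnd_mvec_out[symmetric, OF xb]) (use vF i in \<open>auto simp: Finf_def\<close>)
    also have "\<dots> = 0" using v(2) i by (simp add: unit_vec_def)
    finally show "v i = 0" .
  qed
  have key: "\<And>u. u \<in> V \<Longrightarrow> (\<And>i. Suc t \<le> i \<Longrightarrow> u i = 0) \<Longrightarrow> 1 + u t \<noteq> 0 \<Longrightarrow>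
      x t t + mvec x u t = 1 \<Longrightarrow> ?thesis"
  proof -
    fix u assume u: "u \<in> V" and ub: "\<And>i. Suc t \<le> i \<Longrightarrow> u i = 0" and ut: "1 + u t \<noteq> 0"
      and e: "x t t + mvec x u t = 1"
    have uF: "u \<in> Finf" using u F(4) by auto
    obtain zG: "colshear u t \<in> GLinf" and zs: "act (colshear u t) (W, g, V) = (W, g, V)"
      using stab_col[OF T t u ut] by blast
    define x1 where "x1 = mmul x (colshear u t)"
    have "x1 \<in> GLinf" unfolding x1_def using GLinf_mmul[OF zG x] by blast
    moreover have "bnd (Suc t) x1" unfolding x1_def
      by (rule bnd_mmul[OF xb bnd_colshear]) (use ub in auto)
    moreover have "act x1 (W, g, V) = (W', g', V')"
      unfolding x1_def act_comp[OF zG x F(3) F(4) F(6)] zs ac ..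
    moreover have "x1 t t = 1" unfolding x1_def mmul_colshear_right[OF fx uF] using e by simp
    ultimately show "\<exists>x1. x1 \<in> GLinf \<and> bnd (Suc t) x1 \<and> act x1 (W, g, V) = (W', g', V') \<and> x1 t t = 1"
      by blast
  qed
  show ?thesis
  proof (cases "x t t = 0")
    case True
    define a where "a = (\<lambda>i. v i + (- v t) * unit_vec t i)"
    have aV: "a \<in> V" unfolding a_def by (rule sub_lin[OF F(2) v(1) F(9)[OF t]])
    have "mvec x a t = mvec x v t + (- v t) * mvec x (unit_vec t) t"
      unfolding a_def by (rule mvec_lin[OF vF unit_Finf])
    also have "\<dots> = 1"
    proof -
      have u1: "mvec x (unit_vec t) t = 0" using True by (simp only: mvec_unit)
      have u2: "mvec x v t = 1" using v(2) by (simp add: unit_vec_def)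
      show ?thesis by (simp only: u1 u2) simp
    qed
    finally have e: "mvec x a t = 1" .
    show ?thesis
    proof (rule key[OF aV])
      show "\<And>i. Suc t \<le> i \<Longrightarrow> a i = 0" using vb by (simp add: a_def unit_vec_def)
      show "1 + a t \<noteq> 0" by (simp add: a_def unit_vec_def)
      show "x t t + mvec x a t = 1" using True e by simp
    qed
  next
    case False
    define u where "u = (\<lambda>i. 0 + (1 / x t t - 1) * unit_vec t i)"
    have z0: "(\<lambda>i. 0) \<in> V" using F(2) unfolding is_subspace_def by simp
    have z0F: "(\<lambda>i. 0) \<in> Finf" unfolding Finf_def by simp
    have uV: "u \<in> V" unfolding u_def by (rule sub_lin[OF F(2) z0 F(9)[OF t]])
    have "mvec x u t = mvec x (\<lambda>i. 0) t + (1 / x t t - 1) * mvec x (unit_vec t) t"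
      unfolding u_def by (rule mvec_lin[OF z0F unit_Finf])
    also have "\<dots> = (1 / x t t - 1) * x t t"
    proof -
      have u1: "mvec x (unit_vec t) t = x t t" by (rule mvec_unit)
      have u2: "mvec x (\<lambda>i. 0) t = 0" by (simp add: mvec_def)
      show ?thesis by (simp only: u1 u2) simp
    qed
    finally have e: "mvec x u t = (1 / x t t - 1) * x t t" .
    show ?thesis
    proof (rule key[OF uV])
      show "\<And>i. Suc t \<le> i \<Longrightarrow> u i = 0" by (simp add: u_def unit_vec_def)
      show "1 + u t \<noteq> 0" using False by (simp add: u_def unit_vec_def)
      show "x t t + mvec x u t = 1" using False e by (simp add: algebra_simps)
    qed
  qed
qed

lemma step2:
  assumes T: "(W, g, V) \<in> BT n" and t: "n \<le> t" and x: "x \<in> GLinf" and xb: "bnd (Suc t) x"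
    and ac: "act x (W, g, V) = (W', g', V')" and T': "(W', g', V') \<in> BT n" and xtt: "x t t = 1"
  shows "\<exists>y. y \<in> GLinf \<and> bnd t y \<and> act y (W, g, V) = (W', g', V')"
proof -
  note F = BT_facts[OF T]
  note F' = BT_facts[OF T']
  have fx: "finitary x" "finitary (minv x)" "mmul x (minv x) = idm" "mmul (minv x) x = idm"
    using x minv_props GLinf_finitary by blast+
  have V': "V' = mvec x ` V" and W': "W' = mvec (mtrans (minv x)) ` W" using ac unfolding act_def by simp_all
  have colV: "mvec x (unit_vec t) \<in> V'" using V' F(9)[OF t] by blast
  define b' where "b' = (\<lambda>i. (- 1) * (mvec x (unit_vec t) i + (- 1) * unit_vec t i))"
  have b'V: "b' \<in> V'" unfolding b'_def by (intro sub_scale[OF F'(2)] sub_lin[OF F'(2) colV F'(9)[OF t]])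
  have b'e: "\<And>i. b' i = - (x i t - idm i t)" unfolding b'_def mvec_unit by (simp add: unit_vec_def idm_def)
  have b't: "1 + b' t \<noteq> 0" using b'e xtt by (simp add: idm_def)
  obtain LG: "colshear b' t \<in> GLinf" and Ls: "act (colshear b' t) (W', g', V') = (W', g', V')"
    using stab_col[OF T' t b'V b't] by blast
  have "unit_vec t \<in> W'" using F'(10)[OF t] .
  then obtain w where w: "w \<in> W" "mvec (mtrans (minv x)) w = unit_vec t" using W' by auto
  have wF: "w \<in> Finf" using w F(3) by auto
  have "mvec (mtrans x) (unit_vec t) = mvec (mtrans x) (mvec (mtrans (minv x)) w)" using w by simp
  also have "\<dots> = mvec (mmul (mtrans x) (mtrans (minv x))) w"
    by (rule mvec_mmul[symmetric]) (use fx wF finitary_mtrans in auto)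
  also have "\<dots> = w" using fx wF by (simp add: mtrans_mmul[symmetric] mvec_idm)
  finally have wr: "mvec (mtrans x) (unit_vec t) = w" .
  define c' where "c' = (\<lambda>i. (- 1) * (w i + (- 1) * unit_vec t i))"
  have c'W: "c' \<in> W" unfolding c'_def by (intro sub_scale[OF F(1)] sub_lin[OF F(1) w(1) F(10)[OF t]])
  have we: "\<And>j. w j = x t j" using wr[symmetric] by (simp add: mvec_unit mtrans_def)
  have c'e: "\<And>j. c' j = - (x t j - idm t j)" unfolding c'_def by (simp add: we unit_vec_def idm_def)
  have c't: "c' t = 0" using c'e xtt by (simp add: idm_def)
  obtain RG: "rowshear c' t \<in> GLinf" and Rs: "act (rowshear c' t) (W, g, V) = (W, g, V)"
    using stab_row[OF T t c'W c't] by blast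
  define M where "M = mmul (colshear b' t) x"
  define y where "y = mmul M (rowshear c' t)"
  have MG: "M \<in> GLinf" unfolding M_def using GLinf_mmul[OF x LG] by blast
  have yG: "y \<in> GLinf" unfolding y_def using GLinf_mmul[OF RG MG] by blast
  have "act y (W, g, V) = act M (act (rowshear c' t) (W, g, V))"
    unfolding y_def by (rule act_comp[OF RG MG F(3) F(4) F(6)])
  also have "\<dots> = act (colshear b' t) (act x (W, g, V))"
    unfolding Rs M_def by (rule act_comp[OF x LG F(3) F(4) F(6)])
  also have "\<dots> = (W', g', V')" unfolding ac Ls ..
  finally have ya: "act y (W, g, V) = (W', g', V')" .
  have Me: "\<And>i j. M i j = x i j - (x i t - idm i t) * x t j"
    unfolding M_def mmul_colshear_left b'e by (simp add: algebra_simps)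
  have ye: "\<And>i j. y i j = M i j - M i t * (x t j - idm t j)"
    unfolding y_def mmul_rowshear_right[OF GLinf_finitary[OF MG]] c'e by (simp add: algebra_simps)
  have xo: "\<And>i j. (Suc t \<le> i \<or> Suc t \<le> j) \<Longrightarrow> x i j = idm i j" using xb unfolding bnd_def by blast
  have yb: "bnd t y" unfolding bnd_def
  proof (intro allI impI)
    fix i j assume ij: "t \<le> i \<or> t \<le> j"
    have Mt: "M i t = idm i t" using Me[of i t] xtt by simp
    show "y i j = idm i j"
    proof (cases "i = t")
      case True
      then show ?thesis using ye[of i j] Me[of t j] Mt xtt by (simp add: idm_def)
    next
      case ni: False
      show ?thesis
      proof (cases "t < i")
        case True
        have "x i t = 0" "x i j = idm i j" using xo[of i t] xo[of i j] True ni by (auto simp: idm_def)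
        then show ?thesis using ye[of i j] Me[of i j] Mt ni xtt by (simp add: idm_def)
      next
        case False
        then have j: "t \<le> j" using ij ni by auto
        show ?thesis
        proof (cases "j = t")
          case True
          then show ?thesis using ye[of i j] Mt ni xtt by (simp add: idm_def)
        next
          case False
          then have "x t j = 0" "x i j = idm i j" using xo[of t j] xo[of i j] j by (auto simp: idm_def)
          then show ?thesis using ye[of i j] Me[of i j] Mt ni False xtt by (simp add: idm_def)
        qed
      qed
    qed
  qed
  show ?thesis using yG yb ya by blast
qed

lemma main_ind:
  assumes T: "(W, g, V) \<in> BT n" and T': "T' \<in> BT n"
  shows "\<forall>x. x \<in> GLinf \<longrightarrow> bnd N x \<longrightarrow> act x (W, g, V) = T' \<longrightarrow> (\<exists>y\<in>GLn n. act y (W, g, V) = T')"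
proof (induction N)
  case 0
  then show ?case unfolding GLn_def bnd_def by auto
next
  case (Suc N)
  show ?case
  proof (intro allI impI)
    fix x assume x: "x \<in> GLinf" and xb: "bnd (Suc N) x" and ac: "act x (W, g, V) = T'"
    show "\<exists>y\<in>GLn n. act y (W, g, V) = T'"
    proof (cases "Suc N \<le> n")
      case True
      then have "bnd n x" using bnd_mono xb by blast
      then show ?thesis using x ac unfolding GLn_def bnd_def by auto
    next
      case False
      then have t: "n \<le> N" by simp
      obtain W' g' V' where T'e: "T' = (W', g', V')" by (cases T') auto
      obtain x1 where x1: "x1 \<in> GLinf" "bnd (Suc N) x1" "act x1 (W, g, V) = (W', g', V')" "x1 N N = 1"
        using step1[OF T t x xb ac[unfolded T'e] T'[unfolded T'e]] by blast
      obtain y where y: "y \<in> GLinf" "bnd N y" "act y (W, g, V) = (W', g', V')"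
        using step2[OF T t x1(1,2,3) T'[unfolded T'e] x1(4)] by blast
      then show ?thesis using Suc.IH T'e by blast
    qed
  qed
qed

theorem proposition4p11:
  fixes n :: nat and T T' :: "'a::{field, finite} triple"
  assumes "T \<in> BT n" and "T' \<in> BT n"
    and "\<exists>x\<in>GLinf. act x T = T'"
  shows "\<exists>x\<in>GLn n. act x T = T'"
proof -
  obtain W g V where Te: "T = (W, g, V)" by (cases T) auto
  obtain x where x: "x \<in> GLinf" "act x T = T'" using assms(3) by blast
  obtain N where "bnd N x" using finitary_bnd GLinf_finitary[OF x(1)] by blast
  then show ?thesis using main_ind[OF assms(1)[unfolded Te] assms(2), of N] x Te by blast
qed

end
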